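(* Let $y\in\mathbb{R}^N$, $\lambda>0$ and $\alpha\geq 0$, and consider $$\min_{x\in\mathbb{R}^N}\ \|x\|_1-\alpha\|x\|_2+\frac{1}{2\lambda}\|x-y\|_2^2 .$$ The optimal solutions $x^*$ of this problem are characterized as follows. 1) If $\|y\|_\infty>\lambda$, then the optimal solution is $x^*=z(\|z\|_2+\alpha\lambda)/\|z\|_2$, where $z=\mathcal{S}_1(y,\lambda)$. 2) If $\|y\|_\infty=\lambda$, then $x^*$ is an optimal solution if and only if the following three conditions hold: $x^*_i=0$ whenever $|y_i|<\lambda$; $\|x^*\|_2=\alpha\lambda$; and $x^*_iy_i\geq 0$ for all $i$. If more than one component of $y$ has the maximum absolute value $\lambda$, the optimal solution is not unique; in fact, there are infinitely many optimal solutions. 3) If $(1-\alpha)\lambda<\|y\|_\infty<\lambda$, then $x^*$ is an optimal solution if and only if the following hold: $x^*$ is 1-sparse (exactly one nonzero component); $x^*_i=0$ whenever $|y_i|<\|y\|_\infty$; $\|x^*\|_2=\|y\|_\infty+(\alpha-1)\lambda$; and $x^*_iy_i\geq 0$ for all $i$. The number of optimal solutions equals the number of components of $y$ whose absolute value equals $\|y\|_\infty$. 4) If $\|y\|_\infty\leq(1-\alpha)\lambda$, then the optimal solution is $x^*=0$.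
   Context: The soft shrinkage operator $\mathcal{S}_1(y,\lambda)$ acts componentwise on $y\in\mathbb{R}^N$: $$\mathcal{S}_1(y,\lambda)_i=\begin{cases} y_i-\lambda & \text{if } y_i>\lambda,\\ 0 & \text{if } |y_i|\leq\lambda,\\ y_i+\lambda & \text{if } y_i<-\lambda.\end{cases}$$ *)

theory Defs
  imports "HOL-Analysis.Analysis"
begin

text \<open>Vectors in R^N are modelled as real ^ 'n for a finite index type 'n.
  The Euclidean norm (norm) on real ^ 'n is the 2-norm.\<close>

definition l1norm :: "real ^ 'n \<Rightarrow> real" where
  "l1norm x = (\<Sum>i\<in>UNIV. \<bar>x $ i\<bar>)"

definition linfnorm :: "real ^ 'n \<Rightarrow> real" where
  "linfnorm x = Max (range (\<lambda>i. \<bar>x $ i\<bar>))"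

definition soft_shrink :: "real ^ 'n \<Rightarrow> real \<Rightarrow> real ^ 'n" where
  "soft_shrink y lam = (\<chi> i. if y $ i > lam then y $ i - lam
                              else if y $ i < - lam then y $ i + lam else 0)"

definition l1l2_obj :: "real \<Rightarrow> real \<Rightarrow> real ^ 'n \<Rightarrow> real ^ 'n \<Rightarrow> real" where
  "l1l2_obj alpha lam y x = l1norm x - alpha * norm x + 1 / (2 * lam) * (norm (x - y))\<^sup>2"

definition l1l2_optimal :: "real \<Rightarrow> real \<Rightarrow> real ^ 'n \<Rightarrow> real ^ 'n \<Rightarrow> bool" where
  "l1l2_optimal alpha lam y x = (\<forall>w. l1l2_obj alpha lam y x \<le> l1l2_obj alpha lam y w)"

end

theory Submission
  imports Defs
begin


definition SS :: "real \<Rightarrow> real ^ 'n \<Rightarrow> real ^ 'n \<Rightarrow> real" where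
  "SS lam y x = (\<Sum>i\<in>UNIV. lam * \<bar>x $ i\<bar> - x $ i * y $ i)"

definition HH :: "real \<Rightarrow> real \<Rightarrow> real ^ 'n \<Rightarrow> real ^ 'n \<Rightarrow> real" where
  "HH lam alpha y x = SS lam y x - alpha * lam * norm x + (norm x)\<^sup>2 / 2"

lemma norm_sq_sum: "(norm (x::real^'n))\<^sup>2 = (\<Sum>i\<in>UNIV. (x $ i)\<^sup>2)"
  unfolding power2_norm_eq_inner inner_vec_def by (simp add: power2_eq_square)

lemma inner_sum: "inner (x::real^'n) y = (\<Sum>i\<in>UNIV. x $ i * y $ i)"
  by (simp add: inner_vec_def)

lemma obj_H:
  assumes "lam > 0"
  shows "l1l2_obj alpha lam y x = (HH lam alpha y x + (norm y)\<^sup>2 / 2) / lam"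
proof -
  have d: "(norm (x - y))\<^sup>2 = (norm x)\<^sup>2 - 2 * inner x y + (norm y)\<^sup>2"
    by (simp add: power2_norm_eq_inner inner_diff inner_commute)
  have s: "SS lam y x = lam * l1norm x - inner x y"
    by (simp add: SS_def l1norm_def inner_sum sum_subtractf sum_distrib_left)
  show ?thesis using assms
    unfolding l1l2_obj_def HH_def s d by (simp add: field_simps)
qed

lemma opt_H:
  assumes "lam > 0"
  shows "l1l2_optimal alpha lam y x \<longleftrightarrow> (\<forall>w. HH lam alpha y x \<le> HH lam alpha y w)"
  unfolding l1l2_optimal_def obj_H[OF assms] using assms
  by (simp add: divide_le_cancel)

lemma opt_B:
  assumes "lam > 0" and "\<And>w. HH lam alpha y w \<ge> B" and "HH lam alpha y x0 = B"
  shows "l1l2_optimal alpha lam y x \<longleftrightarrow> HH lam alpha y x = B"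
  unfolding opt_H[OF assms(1)] using assms(2,3) by (metis order.antisym)

lemma l1_ge_norm: "norm (x::real^'n) \<le> l1norm x"
  unfolding l1norm_def by (rule norm_le_l1_cart)

lemma l1_gt_norm:
  assumes "j \<noteq> k" "x $ j \<noteq> 0" "x $ k \<noteq> 0"
  shows "norm (x::real^'n) < l1norm x"
proof -
  let ?L = "l1norm x"
  have L: "?L = (\<Sum>i\<in>UNIV. \<bar>x $ i\<bar>)" by (simp add: l1norm_def)
  have ge: "\<And>i. \<bar>x $ i\<bar> \<le> ?L" unfolding L by (rule member_le_sum) auto
  have jk: "\<bar>x $ j\<bar> + \<bar>x $ k\<bar> \<le> ?L"
  proof -
    have "\<bar>x $ j\<bar> + \<bar>x $ k\<bar> = (\<Sum>i\<in>{j,k}. \<bar>x $ i\<bar>)" using assms(1) by simp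
    also have "\<dots> \<le> ?L" unfolding L by (rule sum_mono2) auto
    finally show ?thesis .
  qed
  have "?L\<^sup>2 - (norm x)\<^sup>2 = (\<Sum>i\<in>UNIV. \<bar>x $ i\<bar> * (?L - \<bar>x $ i\<bar>))"
    unfolding norm_sq_sum
    by (simp add: power2_eq_square L[symmetric] sum_subtractf right_diff_distrib sum_distrib_right[symmetric])
  also have "\<dots> \<ge> \<bar>x $ j\<bar> * (?L - \<bar>x $ j\<bar>)"
    by (rule member_le_sum) (auto intro: mult_nonneg_nonneg simp: ge)
  moreover have "\<bar>x $ j\<bar> * (?L - \<bar>x $ j\<bar>) \<ge> \<bar>x $ j\<bar> * \<bar>x $ k\<bar>"
    using jk by (intro mult_left_mono) auto
  moreover have "\<bar>x $ j\<bar> * \<bar>x $ k\<bar> > 0" using assms by simp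
  ultimately have "?L\<^sup>2 > (norm x)\<^sup>2" by linarith
  moreover have "?L \<ge> 0" unfolding L by (simp add: sum_nonneg)
  ultimately show ?thesis using power2_less_imp_less by blast
qed

lemma linf_ge: "\<bar>(y::real^'n) $ i\<bar> \<le> linfnorm y"
  unfolding linfnorm_def by (rule Max_ge) auto

lemma linf_att: "\<exists>i. \<bar>(y::real^'n) $ i\<bar> = linfnorm y"
proof -
  have "linfnorm y \<in> range (\<lambda>i. \<bar>y $ i\<bar>)" unfolding linfnorm_def by (rule Max_in) auto
  then show ?thesis by auto
qed

lemma linf_nonneg: "linfnorm (y::real^'n) \<ge> 0"
  using linf_ge[of y] abs_ge_zero order_trans by blast

lemma linf_pos: "(y::real^'n) \<noteq> 0 \<Longrightarrow> linfnorm y > 0"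
proof -
  assume "y \<noteq> 0"
  then obtain i where "y $ i \<noteq> 0" by (auto simp: vec_eq_iff)
  then show ?thesis using linf_ge[of y i] by simp
qed

lemma sum_zero_nonneg:
  assumes "\<And>i. (f i::real) \<ge> 0" "(\<Sum>i\<in>(UNIV::'n::finite set). f i) = 0"
  shows "f i = 0"
  using assms sum_nonneg_eq_0_iff[of "UNIV::'n set" f] by auto

lemma comp_ineq:
  fixes a b m lam :: real
  assumes "\<bar>b\<bar> \<le> m"
  shows "lam * \<bar>a\<bar> - a * b - (lam - m) * \<bar>a\<bar> = (m - \<bar>b\<bar>) * \<bar>a\<bar> + (\<bar>a\<bar> * \<bar>b\<bar> - a * b)"
    and "(m - \<bar>b\<bar>) * \<bar>a\<bar> \<ge> 0" and "\<bar>a\<bar> * \<bar>b\<bar> - a * b \<ge> 0"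
    and "(m - \<bar>b\<bar>) * \<bar>a\<bar> + (\<bar>a\<bar> * \<bar>b\<bar> - a * b) = 0 \<longleftrightarrow> (a * b \<ge> 0 \<and> (\<bar>b\<bar> < m \<longrightarrow> a = 0))"
proof -
  show "lam * \<bar>a\<bar> - a * b - (lam - m) * \<bar>a\<bar> = (m - \<bar>b\<bar>) * \<bar>a\<bar> + (\<bar>a\<bar> * \<bar>b\<bar> - a * b)"
    by (simp add: algebra_simps)
  show g1: "(m - \<bar>b\<bar>) * \<bar>a\<bar> \<ge> 0" using assms by simp
  have "a * b \<le> \<bar>a * b\<bar>" by simp
  then show g2: "\<bar>a\<bar> * \<bar>b\<bar> - a * b \<ge> 0" by (simp add: abs_mult)
  have "(m - \<bar>b\<bar>) * \<bar>a\<bar> + (\<bar>a\<bar> * \<bar>b\<bar> - a * b) = 0 \<longleftrightarrow>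
        (m - \<bar>b\<bar>) * \<bar>a\<bar> = 0 \<and> \<bar>a\<bar> * \<bar>b\<bar> - a * b = 0" using g1 g2 by linarith
  also have "\<dots> \<longleftrightarrow> (a * b \<ge> 0 \<and> (\<bar>b\<bar> < m \<longrightarrow> a = 0))"
  proof -
    have 1: "(m - \<bar>b\<bar>) * \<bar>a\<bar> = 0 \<longleftrightarrow> (\<bar>b\<bar> < m \<longrightarrow> a = 0)" using assms by auto
    have 2: "\<bar>a\<bar> * \<bar>b\<bar> - a * b = 0 \<longleftrightarrow> a * b \<ge> 0"
      unfolding abs_mult[symmetric] by auto
    show ?thesis using 1 2 by blast
  qed
  finally show "(m - \<bar>b\<bar>) * \<bar>a\<bar> + (\<bar>a\<bar> * \<bar>b\<bar> - a * b) = 0 \<longleftrightarrow> (a * b \<ge> 0 \<and> (\<bar>b\<bar> < m \<longrightarrow> a = 0))" .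
qed

lemma SS_ge:
  fixes y x :: "real^'n"
  defines "m \<equiv> linfnorm y"
  shows "SS lam y x - (lam - m) * l1norm x \<ge> 0"
    and "SS lam y x - (lam - m) * l1norm x = 0 \<longleftrightarrow> (\<forall>i. x $ i * y $ i \<ge> 0 \<and> (\<bar>y $ i\<bar> < m \<longrightarrow> x $ i = 0))"
proof -
  define g where "g i = (m - \<bar>y $ i\<bar>) * \<bar>x $ i\<bar> + (\<bar>x $ i\<bar> * \<bar>y $ i\<bar> - x $ i * y $ i)" for i
  have b: "\<bar>y $ i\<bar> \<le> m" for i unfolding m_def by (rule linf_ge)
  have eq: "SS lam y x - (lam - m) * l1norm x = (\<Sum>i\<in>UNIV. g i)"
    unfolding SS_def l1norm_def g_def sum_distrib_left sum_subtractf[symmetric]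
    by (intro sum.cong refl) (simp add: algebra_simps)
  have gn: "g i \<ge> 0" for i unfolding g_def using comp_ineq(2)[OF b[of i], of "x $ i"] comp_ineq(3)[OF b[of i], of "x $ i"] by linarith
  show "SS lam y x - (lam - m) * l1norm x \<ge> 0" unfolding eq by (simp add: sum_nonneg gn)
  show "SS lam y x - (lam - m) * l1norm x = 0 \<longleftrightarrow> (\<forall>i. x $ i * y $ i \<ge> 0 \<and> (\<bar>y $ i\<bar> < m \<longrightarrow> x $ i = 0))"
  proof -
    have "(\<Sum>i\<in>UNIV. g i) = 0 \<longleftrightarrow> (\<forall>i. g i = 0)"
      using sum_nonneg_eq_0_iff[of "UNIV::'n set" g] gn by auto
    then show ?thesis unfolding eq g_def using comp_ineq(4)[OF b] by simp
  qed
qed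

lemma HH_decomp:
  fixes y x :: "real^'n" and lam alpha :: real
  defines "m \<equiv> linfnorm y"
  defines "c \<equiv> m + (alpha - 1) * lam"
  shows "HH lam alpha y x = (SS lam y x - (lam - m) * l1norm x) + (lam - m) * (l1norm x - norm x)
          + (norm x - c)\<^sup>2 / 2 - c\<^sup>2 / 2"
  unfolding HH_def c_def power2_eq_square by (simp add: field_simps)

lemma char23:
  fixes y x :: "real^'n" and lam alpha :: real
  defines "m \<equiv> linfnorm y"
  defines "c \<equiv> m + (alpha - 1) * lam"
  assumes "m \<le> lam"
  shows "HH lam alpha y x \<ge> - c\<^sup>2 / 2"
    and "HH lam alpha y x = - c\<^sup>2 / 2 \<longleftrightarrow> (\<forall>i. x $ i * y $ i \<ge> 0 \<and> (\<bar>y $ i\<bar> < m \<longrightarrow> x $ i = 0))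
           \<and> (lam - m) * (l1norm x - norm x) = 0 \<and> norm x = c"
proof -
  have a: "SS lam y x - (lam - m) * l1norm x \<ge> 0" unfolding m_def by (rule SS_ge)
  have b: "(lam - m) * (l1norm x - norm x) \<ge> 0" using assms(3) l1_ge_norm[of x] by simp
  have d: "(norm x - c)\<^sup>2 / 2 \<ge> 0" by simp
  note e = HH_decomp[of lam alpha y x, folded m_def, folded c_def]
  show "HH lam alpha y x \<ge> - c\<^sup>2 / 2" unfolding e using a b d by linarith
  have "HH lam alpha y x = - c\<^sup>2 / 2 \<longleftrightarrow> SS lam y x - (lam - m) * l1norm x = 0 \<and>
     (lam - m) * (l1norm x - norm x) = 0 \<and> (norm x - c)\<^sup>2 / 2 = 0"
    unfolding e using a b d by linarith
  then show "HH lam alpha y x = - c\<^sup>2 / 2 \<longleftrightarrow> (\<forall>i. x $ i * y $ i \<ge> 0 \<and> (\<bar>y $ i\<bar> < m \<longrightarrow> x $ i = 0))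
           \<and> (lam - m) * (l1norm x - norm x) = 0 \<and> norm x = c"
    unfolding SS_ge(2)[of lam y x, folded m_def] by simp
qed

lemma axis_comp: "axis i v $ j = (if j = i then v else 0)"
  by (simp add: axis_def)

lemma norm_axis_real: "norm (axis i (v::real) :: real^'n) = \<bar>v\<bar>"
proof -
  have e: "(\<lambda>j. ((axis i v::real^'n) $ j)\<^sup>2) = (\<lambda>j. if j = i then v\<^sup>2 else 0)"
    by (auto simp: axis_comp)
  have "(norm (axis i v :: real^'n))\<^sup>2 = v\<^sup>2"
    unfolding norm_sq_sum e by simp
  then show ?thesis by (metis norm_ge_zero real_sqrt_abs real_sqrt_unique)
qed

lemma l1_axis: "l1norm (axis i (v::real) :: real^'n) = \<bar>v\<bar>"
proof -
  have e: "(\<lambda>j. \<bar>(axis i v::real^'n) $ j\<bar>) = (\<lambda>j. if j = i then \<bar>v\<bar> else 0)"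
    by (auto simp: axis_comp)
  show ?thesis unfolding l1norm_def e by simp
qed

definition sg :: "real \<Rightarrow> real" where "sg b = (if b \<ge> 0 then 1 else -1)"

lemma W_conds:
  fixes y :: "real^'n" and lam alpha :: real
  defines "m \<equiv> linfnorm y"
  defines "c \<equiv> m + (alpha - 1) * lam"
  assumes "\<bar>y $ i\<bar> = m" "c \<ge> 0"
  defines "x \<equiv> axis i (sg (y $ i) * c) :: real^'n"
  shows "(\<forall>j. x $ j * y $ j \<ge> 0 \<and> (\<bar>y $ j\<bar> < m \<longrightarrow> x $ j = 0))
           \<and> (lam - m) * (l1norm x - norm x) = 0 \<and> norm x = c"
proof -
  have n: "norm x = c" "l1norm x = c" unfolding x_def norm_axis_real l1_axis
    using assms(4) by (auto simp: sg_def abs_mult)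
  have "x $ j * y $ j \<ge> 0 \<and> (\<bar>y $ j\<bar> < m \<longrightarrow> x $ j = 0)" for j
    unfolding x_def axis_comp using assms(3,4)
    by (auto simp: sg_def mult_nonneg_nonneg mult_nonpos_nonpos mult_nonneg_nonpos)
  then show ?thesis using n by simp
qed

lemma opt23:
  fixes y x :: "real^'n" and lam alpha :: real
  defines "m \<equiv> linfnorm y"
  defines "c \<equiv> m + (alpha - 1) * lam"
  assumes "lam > 0" "m \<le> lam" "c \<ge> 0"
  shows "l1l2_optimal alpha lam y x \<longleftrightarrow> (\<forall>i. x $ i * y $ i \<ge> 0 \<and> (\<bar>y $ i\<bar> < m \<longrightarrow> x $ i = 0))
           \<and> (lam - m) * (l1norm x - norm x) = 0 \<and> norm x = c"
proof -
  obtain i where i: "\<bar>y $ i\<bar> = m" using linf_att[of y] m_def by auto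
  note ch = char23[of y lam alpha, folded m_def, folded c_def, OF assms(4)]
  have w: "HH lam alpha y (axis i (sg (y $ i) * c)) = - c\<^sup>2 / 2"
    unfolding ch(2) using W_conds[of y i alpha lam, folded m_def, folded c_def, OF i assms(5)] by auto
  show ?thesis unfolding opt_B[OF assms(3) ch(1) w] ch(2) ..
qed

lemma sparse:
  fixes x :: "real^'n"
  assumes "x \<noteq> 0"
  shows "l1norm x = norm x \<longleftrightarrow> card {i. x $ i \<noteq> 0} = 1"
proof
  assume c: "card {i. x $ i \<noteq> 0} = 1"
  then obtain k where k: "{i. x $ i \<noteq> 0} = {k}" by (auto simp: card_1_singleton_iff)
  have "x = axis k (x $ k)" using k by (auto simp: vec_eq_iff axis_comp)
  then show "l1norm x = norm x" by (metis norm_axis_real l1_axis)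
next
  assume e: "l1norm x = norm x"
  obtain j where j: "x $ j \<noteq> 0" using assms by (auto simp: vec_eq_iff)
  have "{i. x $ i \<noteq> 0} = {j}"
  proof (rule ccontr)
    assume "{i. x $ i \<noteq> 0} \<noteq> {j}"
    then obtain k where "k \<noteq> j" "x $ k \<noteq> 0" using j by auto
    then show False using l1_gt_norm[of j k x] j e by auto
  qed
  then show "card {i. x $ i \<noteq> 0} = 1" by simp
qed

lemma HH_zero: "HH lam alpha y (0::real^'n) = 0"
  by (simp add: HH_def SS_def)

lemma case4:
  fixes y x :: "real^'n" and lam alpha :: real
  assumes "lam > 0" "alpha \<ge> 0" "linfnorm y \<le> (1 - alpha) * lam"
  shows "l1l2_optimal alpha lam y x \<longleftrightarrow> x = 0"
proof -
  define m where "m = linfnorm y"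
  define c where "c = m + (alpha - 1) * lam"
  have "alpha * lam \<ge> 0" using assms by simp
  then have ml: "m \<le> lam" using assms(3) unfolding m_def by (simp add: algebra_simps)
  have c0: "c \<le> 0" using assms(3) unfolding c_def m_def by (simp add: algebra_simps)
  have lb: "HH lam alpha y w \<ge> (norm w)\<^sup>2 / 2" for w
  proof -
    have a: "SS lam y w - (lam - m) * l1norm w \<ge> 0" unfolding m_def by (rule SS_ge)
    have b: "(lam - m) * (l1norm w - norm w) \<ge> 0" using ml l1_ge_norm[of w] by simp
    have d: "(norm w - c)\<^sup>2 / 2 - c\<^sup>2 / 2 \<ge> (norm w)\<^sup>2 / 2"
    proof -
      have "(norm w - c)\<^sup>2 / 2 - c\<^sup>2 / 2 = (norm w)\<^sup>2 / 2 - c * norm w"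
        by (simp add: power2_eq_square field_simps)
      moreover have "c * norm w \<le> 0" using c0 by (simp add: mult_nonpos_nonneg)
      ultimately show ?thesis by linarith
    qed
    show ?thesis using HH_decomp[of lam alpha y w, folded m_def, folded c_def] a b d by linarith
  qed
  have lb0: "HH lam alpha y w \<ge> 0" for w using lb[of w] zero_le_power2[of "norm w"] by linarith
  show ?thesis unfolding opt_B[OF assms(1) lb0 HH_zero]
  proof
    assume "HH lam alpha y x = 0"
    then have "(norm x)\<^sup>2 / 2 \<le> 0" using lb[of x] by simp
    then show "x = 0" by simp
  qed (simp add: HH_zero)
qed

lemma comp1:
  fixes a b lam :: real
  assumes "lam > 0"
  defines "zb \<equiv> (if b > lam then b - lam else if b < - lam then b + lam else 0)"
  shows "lam * \<bar>a\<bar> - a * b + a * zb \<ge> 0"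
proof -
  have "a * b \<le> \<bar>a\<bar> * \<bar>b\<bar>" by (metis abs_ge_self abs_mult)
  moreover have "lam * a \<le> lam * \<bar>a\<bar>" using assms(1) by auto
  moreover have "lam * (- a) \<le> lam * \<bar>a\<bar>" using assms(1) by (intro mult_left_mono) auto
  moreover have "\<not> b > lam \<Longrightarrow> \<not> b < - lam \<Longrightarrow> \<bar>a\<bar> * \<bar>b\<bar> \<le> \<bar>a\<bar> * lam"
  proof -
    assume "\<not> b > lam" "\<not> b < - lam"
    then have "\<bar>b\<bar> \<le> lam" by linarith
    then show ?thesis by (simp add: mult_left_mono)
  qed
  ultimately show ?thesis unfolding zb_def by (auto simp: algebra_simps)
qed

lemma comp1_eq:
  fixes b lam c :: real
  assumes "lam > 0" "c \<ge> 0"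
  defines "zb \<equiv> (if b > lam then b - lam else if b < - lam then b + lam else 0)"
  shows "lam * \<bar>c * zb\<bar> - (c * zb) * b + (c * zb) * zb = 0"
  using assms unfolding zb_def by (auto simp: abs_mult algebra_simps)

lemma ss_comp: "soft_shrink y lam $ i = (if y $ i > lam then y $ i - lam else if y $ i < - lam then y $ i + lam else 0)"
  by (simp add: soft_shrink_def)

lemma case1:
  fixes y x :: "real^'n" and lam alpha :: real
  assumes "lam > 0" "alpha \<ge> 0" "linfnorm y > lam"
  defines "z \<equiv> soft_shrink y lam"
  shows "l1l2_optimal alpha lam y x \<longleftrightarrow> x = ((norm z + alpha * lam) / norm z) *\<^sub>R z"
proof -
  define s where "s = norm z + alpha * lam"
  obtain i where i: "\<bar>y $ i\<bar> = linfnorm y" using linf_att by blast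
  have "z $ i \<noteq> 0" unfolding z_def ss_comp using i assms(3) by auto
  then have zp: "norm z > 0" by (metis norm_eq_zero zero_less_norm_iff vec_eq_iff zero_index)
  have "alpha * lam \<ge> 0" using assms by simp
  then have sp: "s > 0" using zp unfolding s_def by linarith
  have SSz: "SS lam y w + inner w z \<ge> 0" for w
  proof -
    have "SS lam y w + inner w z = (\<Sum>j\<in>UNIV. lam * \<bar>w $ j\<bar> - w $ j * y $ j + w $ j * z $ j)"
      unfolding SS_def inner_sum sum.distrib[symmetric] ..
    also have "\<dots> \<ge> 0" unfolding z_def ss_comp by (intro sum_nonneg comp1 assms(1))
    finally show ?thesis .
  qed
  have dec: "HH lam alpha y w = (SS lam y w + inner w z) + (norm w * norm z - inner w z)
      + (norm w - s)\<^sup>2 / 2 - s\<^sup>2 / 2" for w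
    unfolding HH_def s_def power2_eq_square by (simp add: field_simps)
  have lb: "HH lam alpha y w \<ge> - s\<^sup>2 / 2" for w
    using dec[of w] SSz[of w] norm_cauchy_schwarz[of w z] zero_le_power2[of "norm w - s"] by linarith
  define c where "c = s / norm z"
  have c0: "c \<ge> 0" using sp zp by (simp add: c_def)
  define xs where "xs = c *\<^sub>R z"
  have nxs: "norm xs = s" using c0 zp sp by (simp add: xs_def c_def)
  have ixs: "inner xs z = norm xs * norm z"
    using c0 by (simp add: xs_def power2_norm_eq_inner[symmetric] power2_eq_square)
  have Sxs: "SS lam y xs + inner xs z = 0"
  proof -
    have "SS lam y xs + inner xs z = (\<Sum>j\<in>UNIV. lam * \<bar>c * z $ j\<bar> - (c * z $ j) * y $ j + (c * z $ j) * z $ j)"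
      unfolding SS_def inner_sum sum.distrib[symmetric] xs_def by simp
    also have "\<dots> = 0" unfolding z_def ss_comp by (intro sum.neutral ballI comp1_eq assms(1) c0)
    finally show ?thesis .
  qed
  have hxs: "HH lam alpha y xs = - s\<^sup>2 / 2" using dec[of xs] Sxs ixs nxs by simp
  show ?thesis unfolding opt_B[OF assms(1) lb hxs]
  proof
    assume h: "HH lam alpha y x = - s\<^sup>2 / 2"
    have a: "norm x * norm z - inner x z \<ge> 0" using norm_cauchy_schwarz[of x z] by simp
    have e1: "(norm x - s)\<^sup>2 / 2 = 0" and e2: "norm x * norm z - inner x z = 0"
      using dec[of x] h SSz[of x] a zero_le_power2[of "norm x - s"] by linarith+
    have nx: "norm x = s" using e1 by simp
    have q: "inner (a *\<^sub>R x - b *\<^sub>R z) (a *\<^sub>R x - b *\<^sub>R z) = a * a * inner x x - 2 * a * b * inner x z + b * b * inner z z" for a b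
      unfolding inner_diff_left inner_diff_right inner_scaleR_left inner_scaleR_right inner_commute[of z x]
      by (simp add: algebra_simps)
    have xz: "inner x z = norm x * norm z" using e2 by simp
    have "(norm (norm z *\<^sub>R x - norm x *\<^sub>R z))\<^sup>2 = 0"
      unfolding power2_norm_eq_inner[of "norm z *\<^sub>R x - norm x *\<^sub>R z"] q
      unfolding dot_square_norm xz by (simp add: power2_eq_square)
    then have "norm z *\<^sub>R x = norm x *\<^sub>R z" by simp
    then have "x = (norm x / norm z) *\<^sub>R z" using zp
      by (metis (no_types, lifting) divide_inverse_commute inverse_eq_divide norm_eq_zero
           order_less_irrefl scaleR_scaleR vector_fraction_eq_iff)
    then show "x = ((norm z + alpha * lam) / norm z) *\<^sub>R z" using nx s_def by simp
  next
    assume "x = ((norm z + alpha * lam) / norm z) *\<^sub>R z"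
    then have "x = xs" by (simp add: xs_def c_def s_def)
    then show "HH lam alpha y x = - s\<^sup>2 / 2" using hxs by simp
  qed
qed

lemma case2:
  fixes y x :: "real^'n" and lam alpha :: real
  assumes "lam > 0" "alpha \<ge> 0" "linfnorm y = lam"
  shows "l1l2_optimal alpha lam y x \<longleftrightarrow>
     ((\<forall>i. \<bar>y $ i\<bar> < lam \<longrightarrow> x $ i = 0) \<and> norm x = alpha * lam \<and> (\<forall>i. x $ i * y $ i \<ge> 0))"
proof -
  have c: "linfnorm y + (alpha - 1) * lam = alpha * lam" using assms(3) by (simp add: algebra_simps)
  have "alpha * lam \<ge> 0" using assms by simp
  then have "l1l2_optimal alpha lam y x \<longleftrightarrow> (\<forall>i. x $ i * y $ i \<ge> 0 \<and> (\<bar>y $ i\<bar> < linfnorm y \<longrightarrow> x $ i = 0))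
           \<and> (lam - linfnorm y) * (l1norm x - norm x) = 0 \<and> norm x = linfnorm y + (alpha - 1) * lam"
  proof -
    have m: "linfnorm y \<le> lam" using assms(3) by simp
    have cc: "0 \<le> linfnorm y + (alpha - 1) * lam" using c \<open>alpha * lam \<ge> 0\<close> by simp
    show ?thesis by (rule opt23[OF assms(1) m cc])
  qed
  then show ?thesis unfolding c using assms(3) by auto
qed

lemma two_elems:
  assumes "card A > (1::nat)"
  obtains j k where "j \<in> A" "k \<in> A" "j \<noteq> k"
proof -
  have f: "finite A" using assms by (metis card.infinite not_less_zero)
  have "\<not> (\<forall>a1 \<in> A. \<forall>a2 \<in> A. a1 = a2)" using card_le_Suc0_iff_eq[OF f] assms by simp
  then show ?thesis using that by blast
qed

lemma case2_inf:
  fixes y :: "real^'n" and lam alpha :: real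
  assumes "lam > 0" "alpha > 0" "linfnorm y = lam" "card {i. \<bar>y $ i\<bar> = lam} > 1"
  shows "infinite {x. l1l2_optimal alpha lam y x}"
proof -
  obtain j k where jk: "\<bar>y $ j\<bar> = lam" "\<bar>y $ k\<bar> = lam" "j \<noteq> k"
    using two_elems[OF assms(4)] by auto
  define r where "r = alpha * lam"
  have r: "r > 0" using assms by (simp add: r_def)
  define f :: "real \<Rightarrow> real^'n" where "f s = axis j (sg (y $ j) * (r * s)) + axis k (sg (y $ k) * (r * sqrt (1 - s\<^sup>2)))" for s
  have fc: "f s $ i = (if i = j then sg (y $ j) * (r * s) else 0) + (if i = k then sg (y $ k) * (r * sqrt (1 - s\<^sup>2)) else 0)" for s i
    unfolding f_def by (simp add: axis_comp)
  have sgp: "\<bar>sg b\<bar> = 1" for b by (simp add: sg_def)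
  have opt: "l1l2_optimal alpha lam y (f s)" if s: "s \<in> {0..1}" for s
  proof -
    have s1: "1 - s\<^sup>2 \<ge> 0" using s by (simp add: abs_le_iff power_le_one)
    have "(norm (f s))\<^sup>2 = (norm (axis j (sg (y $ j) * (r * s)) :: real^'n))\<^sup>2 + (norm (axis k (sg (y $ k) * (r * sqrt (1 - s\<^sup>2))) :: real^'n))\<^sup>2"
      unfolding f_def power2_norm_eq_inner inner_add_left inner_add_right inner_axis_axis using jk(3) by simp
    also have "\<dots> = (r * s)\<^sup>2 + (r * sqrt (1 - s\<^sup>2))\<^sup>2" unfolding norm_axis_real abs_mult sgp
      by (simp add: power_mult_distrib)
    also have "\<dots> = r\<^sup>2" using s1 by (simp add: power_mult_distrib algebra_simps)
    finally have "norm (f s) = r" using r by (simp add: power2_eq_iff_nonneg)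
    moreover have "\<bar>y $ i\<bar> < lam \<longrightarrow> f s $ i = 0" for i using jk unfolding fc by auto
    moreover have "f s $ i * y $ i \<ge> 0" for i
    proof -
      have rs: "r * s \<ge> 0" using r s by simp
      have a: "sg (y $ j) * (r * s) * y $ j \<ge> 0" using rs
        by (auto simp: sg_def intro: mult_nonneg_nonpos mult_nonneg_nonneg)
      have rs2: "r * sqrt (1 - s\<^sup>2) \<ge> 0" using r s1 by simp
      have b: "sg (y $ k) * (r * sqrt (1 - s\<^sup>2)) * y $ k \<ge> 0" using rs2
        by (auto simp: sg_def intro: mult_nonneg_nonpos mult_nonneg_nonneg)
      show ?thesis unfolding fc using a b jk(3) by (auto simp: distrib_right)
    qed
    ultimately show ?thesis unfolding case2[OF assms(1) less_imp_le[OF assms(2)] assms(3)] r_def by auto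
  qed
  have inj: "inj_on f {0..1}"
  proof (rule inj_onI)
    fix a b assume "a \<in> {0..1::real}" "b \<in> {0..1::real}" "f a = f b"
    then have "f a $ j = f b $ j" by simp
    then have "sg (y $ j) * (r * a) = sg (y $ j) * (r * b)" unfolding fc using jk(3) by simp
    then show "a = b" using r by (auto simp: sg_def split: if_splits)
  qed
  have "infinite (f ` {0..1})" using finite_imageD[OF _ inj] infinite_Icc[of "0::real" 1] by auto
  moreover have "f ` {0..1} \<subseteq> {x. l1l2_optimal alpha lam y x}" using opt by auto
  ultimately show ?thesis using finite_subset by blast
qed

lemma case3:
  fixes y x :: "real^'n" and lam alpha :: real
  assumes "lam > 0" "(1 - alpha) * lam < linfnorm y" "linfnorm y < lam"
  shows "l1l2_optimal alpha lam y x \<longleftrightarrow>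
            (card {i. x $ i \<noteq> 0} = 1
             \<and> (\<forall>i. \<bar>y $ i\<bar> < linfnorm y \<longrightarrow> x $ i = 0)
             \<and> norm x = linfnorm y + (alpha - 1) * lam
             \<and> (\<forall>i. x $ i * y $ i \<ge> 0))"
proof -
  define c where "c = linfnorm y + (alpha - 1) * lam"
  have cp: "c > 0" using assms(2) unfolding c_def by (simp add: algebra_simps)
  have o: "l1l2_optimal alpha lam y x \<longleftrightarrow> (\<forall>i. x $ i * y $ i \<ge> 0 \<and> (\<bar>y $ i\<bar> < linfnorm y \<longrightarrow> x $ i = 0))
           \<and> (lam - linfnorm y) * (l1norm x - norm x) = 0 \<and> norm x = c"
    unfolding c_def using assms cp unfolding c_def by (intro opt23) auto
  have e: "norm x = c \<Longrightarrow> (lam - linfnorm y) * (l1norm x - norm x) = 0 \<longleftrightarrow> card {i. x $ i \<noteq> 0} = 1"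
  proof -
    assume n: "norm x = c"
    then have "x \<noteq> 0" using cp by auto
    then have "l1norm x = norm x \<longleftrightarrow> card {i. x $ i \<noteq> 0} = 1" by (rule sparse)
    then show ?thesis using assms(3) by auto
  qed
  show ?thesis unfolding o c_def[symmetric] using e by auto
qed

lemma case3_card:
  fixes y :: "real^'n" and lam alpha :: real
  assumes "lam > 0" "(1 - alpha) * lam < linfnorm y" "linfnorm y < lam" "y \<noteq> 0"
  shows "card {x. l1l2_optimal alpha lam y x} = card {i. \<bar>y $ i\<bar> = linfnorm y}"
proof -
  define m where "m = linfnorm y"
  define c where "c = m + (alpha - 1) * lam"
  have cp: "c > 0" using assms(2) unfolding c_def m_def by (simp add: algebra_simps)
  have mp: "m > 0" using linf_pos[OF assms(4)] m_def by simp
  define W where "W i = (axis i (sg (y $ i) * c) :: real^'n)" for i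
  have eq: "{x. l1l2_optimal alpha lam y x} = W ` {i. \<bar>y $ i\<bar> = m}"
  proof
    show "W ` {i. \<bar>y $ i\<bar> = m} \<subseteq> {x. l1l2_optimal alpha lam y x}"
    proof
      fix x assume "x \<in> W ` {i. \<bar>y $ i\<bar> = m}"
      then obtain i where i: "\<bar>y $ i\<bar> = m" and x: "x = W i" by auto
      have "(\<forall>j. x $ j * y $ j \<ge> 0 \<and> (\<bar>y $ j\<bar> < m \<longrightarrow> x $ j = 0))
           \<and> (lam - m) * (l1norm x - norm x) = 0 \<and> norm x = c"
        unfolding x W_def c_def m_def by (rule W_conds) (use i cp in \<open>auto simp: m_def c_def\<close>)
      moreover have "m \<le> lam" using assms(3) m_def by simp
      ultimately show "x \<in> {x. l1l2_optimal alpha lam y x}"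
        using opt23[of lam y alpha x] assms(1) cp unfolding m_def c_def by auto
    qed
  next
    show "{x. l1l2_optimal alpha lam y x} \<subseteq> W ` {i. \<bar>y $ i\<bar> = m}"
    proof
      fix x assume "x \<in> {x. l1l2_optimal alpha lam y x}"
      then have h: "card {i. x $ i \<noteq> 0} = 1" "\<forall>i. \<bar>y $ i\<bar> < m \<longrightarrow> x $ i = 0" "norm x = c" "\<forall>i. x $ i * y $ i \<ge> 0"
        using case3[OF assms(1-3)] unfolding m_def c_def by auto
      then obtain i where i: "{j. x $ j \<noteq> 0} = {i}" by (auto simp: card_1_singleton_iff)
      have xi: "x $ i \<noteq> 0" using i by auto
      have xe: "x = axis i (x $ i)" using i by (auto simp: vec_eq_iff axis_comp)
      have yi: "\<bar>y $ i\<bar> = m" using h(2) xi linf_ge[of y i] m_def by force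
      have ax: "\<bar>x $ i\<bar> = c" using h(3) xe norm_axis_real by metis
      have "x $ i = sg (y $ i) * c"
      proof (cases "y $ i > 0")
        case True
        then have "x $ i \<ge> 0" using h(4) zero_le_mult_iff by (metis not_le)
        then show ?thesis using ax True by (simp add: sg_def)
      next
        case False
        then have yn: "y $ i < 0" using yi mp by auto
        then have "x $ i \<le> 0" using h(4) zero_le_mult_iff by (metis not_le)
        then show ?thesis using ax yn by (auto simp: sg_def)
      qed
      then have "x = W i" using xe W_def by simp
      then show "x \<in> W ` {i. \<bar>y $ i\<bar> = m}" using yi by auto
    qed
  qed
  have inj: "inj_on W {i. \<bar>y $ i\<bar> = m}"
  proof (rule inj_onI)
    fix i j assume "W i = W j"
    moreover have "sg b * c \<noteq> 0" for b using cp by (simp add: sg_def)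
    ultimately show "i = j" unfolding W_def axis_eq_axis by auto
  qed
  show ?thesis using card_image[OF inj] eq unfolding m_def by simp
qed



theorem lemma1:
  fixes y :: "real ^ 'n" and lam alpha :: real
  assumes "lam > 0" and "alpha \<ge> 0"
  shows
   "(linfnorm y > lam \<longrightarrow>
       (\<forall>x. l1l2_optimal alpha lam y x \<longleftrightarrow>
            x = ((norm (soft_shrink y lam) + alpha * lam) / norm (soft_shrink y lam))
                  *\<^sub>R soft_shrink y lam))
  \<and> (linfnorm y = lam \<longrightarrow>
       (\<forall>x. l1l2_optimal alpha lam y x \<longleftrightarrow>
            ((\<forall>i. \<bar>y $ i\<bar> < lam \<longrightarrow> x $ i = 0) \<and> norm x = alpha * lam
             \<and> (\<forall>i. x $ i * y $ i \<ge> 0)))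
     \<and> (alpha > 0 \<and> card {i. \<bar>y $ i\<bar> = lam} > 1 \<longrightarrow>
            infinite {x. l1l2_optimal alpha lam y x}))
  \<and> ((1 - alpha) * lam < linfnorm y \<and> linfnorm y < lam \<longrightarrow>
       (\<forall>x. l1l2_optimal alpha lam y x \<longleftrightarrow>
            (card {i. x $ i \<noteq> 0} = 1
             \<and> (\<forall>i. \<bar>y $ i\<bar> < linfnorm y \<longrightarrow> x $ i = 0)
             \<and> norm x = linfnorm y + (alpha - 1) * lam
             \<and> (\<forall>i. x $ i * y $ i \<ge> 0)))
     \<and> (y \<noteq> 0 \<longrightarrow>
            card {x. l1l2_optimal alpha lam y x} = card {i. \<bar>y $ i\<bar> = linfnorm y}))
  \<and> (linfnorm y \<le> (1 - alpha) * lam \<longrightarrow>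
       (\<forall>x. l1l2_optimal alpha lam y x \<longleftrightarrow> x = 0))"
  proof -
  have a0: "alpha \<ge> 0" by fact
  show ?thesis
  proof (intro conjI impI allI)
    fix x assume "linfnorm y > lam"
    then show "l1l2_optimal alpha lam y x \<longleftrightarrow>
            x = ((norm (soft_shrink y lam) + alpha * lam) / norm (soft_shrink y lam)) *\<^sub>R soft_shrink y lam"
      using case1[OF assms(1,2)] by blast
  next
    fix x assume "linfnorm y = lam"
    then show "l1l2_optimal alpha lam y x \<longleftrightarrow>
            ((\<forall>i. \<bar>y $ i\<bar> < lam \<longrightarrow> x $ i = 0) \<and> norm x = alpha * lam \<and> (\<forall>i. x $ i * y $ i \<ge> 0))"
      using case2[OF assms(1,2)] by blast
  next
    assume "linfnorm y = lam" "alpha > 0 \<and> card {i. \<bar>y $ i\<bar> = lam} > 1"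
    then show "infinite {x. l1l2_optimal alpha lam y x}" using case2_inf[OF assms(1)] by blast
  next
    fix x assume "(1 - alpha) * lam < linfnorm y \<and> linfnorm y < lam"
    then show "l1l2_optimal alpha lam y x \<longleftrightarrow>
            (card {i. x $ i \<noteq> 0} = 1
             \<and> (\<forall>i. \<bar>y $ i\<bar> < linfnorm y \<longrightarrow> x $ i = 0)
             \<and> norm x = linfnorm y + (alpha - 1) * lam
             \<and> (\<forall>i. x $ i * y $ i \<ge> 0))"
      using case3[OF assms(1)] by blast
  next
    assume "(1 - alpha) * lam < linfnorm y \<and> linfnorm y < lam" "y \<noteq> 0"
    then show "card {x. l1l2_optimal alpha lam y x} = card {i. \<bar>y $ i\<bar> = linfnorm y}"
      using case3_card[OF assms(1)] by blast
  next
    fix x assume "linfnorm y \<le> (1 - alpha) * lam"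
    then show "l1l2_optimal alpha lam y x \<longleftrightarrow> x = 0" using case4[OF assms(1,2)] by blast
  qed
qed

end
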